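(* Let $1<p<5$. For every $d\in(-1,1)$, let $\mathcal E_0(d)$ be the (open) ellipse in $\mathbb R^2$ centered at $(c(d),0)=\big(-\frac{3d}{4-d^2},0\big)$ with horizontal axis of total length $2a(d)=\frac{4(1-d^2)}{4-d^2}$ and vertical axis of total length $2b(d)=2\sqrt{\frac{1-d^2}{4-d^2}}$. Then $\mathcal E_0(d)\subset B(0,1)$ and \[ \int_{\mathcal E_0(d)}\kappa(de_1,Y)^{p+1}\rho(Y)\,dY=\kappa_0^{p+1}\int_{|y|<\frac12}\rho(y)\,dy . \]
   Context: $\rho(y)=(1-|y|^2)^{\frac{5-p}{2(p-1)}}$; $\kappa_0=\big(\frac{2(p+1)}{(p-1)^2}\big)^{\frac1{p-1}}$; $\kappa(de_1,Y)=\kappa_0\frac{(1-d^2)^{\frac1{p-1}}}{(1+dY_1)^{\frac2{p-1}}}$ for $|Y|<1$, where $e_1=(1,0)$. *)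

theory Defs
  imports "HOL-Analysis.Analysis"
begin

definition rho :: "real \<Rightarrow> real ^ 2 \<Rightarrow> real" where
  "rho p y = (1 - (norm y)\<^sup>2) powr ((5 - p) / (2 * (p - 1)))"

definition kappa0 :: "real \<Rightarrow> real" where
  "kappa0 p = (2 * (p + 1) / (p - 1)\<^sup>2) powr (1 / (p - 1))"

text \<open>kappa(d e_1, Y), for |Y| < 1.\<close>
definition kappa :: "real \<Rightarrow> real \<Rightarrow> real ^ 2 \<Rightarrow> real" where
  "kappa p d Y = kappa0 p * (1 - d\<^sup>2) powr (1 / (p - 1)) / (1 + d * Y$1) powr (2 / (p - 1))"

definition ell_c :: "real \<Rightarrow> real" where "ell_c d = - 3 * d / (4 - d\<^sup>2)"
definition ell_a :: "real \<Rightarrow> real" where "ell_a d = 2 * (1 - d\<^sup>2) / (4 - d\<^sup>2)"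
definition ell_b :: "real \<Rightarrow> real" where "ell_b d = sqrt ((1 - d\<^sup>2) / (4 - d\<^sup>2))"

definition E0 :: "real \<Rightarrow> (real ^ 2) set" where
  "E0 d = {Y. ((Y$1 - ell_c d) / ell_a d)\<^sup>2 + (Y$2 / ell_b d)\<^sup>2 < 1}"

end

theory Submission imports Defs begin

definition G :: "real \<Rightarrow> real^2 \<Rightarrow> real^2" where
 "G d y = ((y$1 - d)/(1 - d*y$1)) *\<^sub>R axis 1 1 + (sqrt (1-d\<^sup>2)*y$2/(1 - d*y$1)) *\<^sub>R axis 2 1"
definition H :: "real \<Rightarrow> real^2 \<Rightarrow> real^2" where
 "H d Y = ((Y$1 + d)/(1 + d*Y$1)) *\<^sub>R axis 1 1 + (sqrt (1-d\<^sup>2)*Y$2/(1 + d*Y$1)) *\<^sub>R axis 2 1"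
definition G' :: "real \<Rightarrow> real^2 \<Rightarrow> real^2 \<Rightarrow> real^2" where
 "G' d y = (\<lambda>h. ((1-d\<^sup>2)/(1-d*y$1)\<^sup>2 * h$1) *\<^sub>R axis 1 1 +
     (sqrt(1-d\<^sup>2)*d*y$2/(1-d*y$1)\<^sup>2 * h$1 + sqrt(1-d\<^sup>2)/(1-d*y$1) * h$2) *\<^sub>R axis 2 1)"

lemma G_nth [simp]: "G d y $ 1 = (y$1 - d)/(1 - d*y$1)" "G d y $ 2 = sqrt (1-d\<^sup>2)*y$2/(1 - d*y$1)"
  by (simp_all add: G_def axis_def)
lemma H_nth [simp]: "H d Y $ 1 = (Y$1 + d)/(1 + d*Y$1)" "H d Y $ 2 = sqrt (1-d\<^sup>2)*Y$2/(1 + d*Y$1)"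
  by (simp_all add: H_def axis_def)

lemma norm2_vec2: "(norm (y::real^2))\<^sup>2 = (y$1)\<^sup>2 + (y$2)\<^sup>2"
  by (simp add: norm_vec_def L2_set_def UNIV_2)

lemma has_derivative_vec_nth' [derivative_intros]:
  "((\<lambda>x. x $ i) has_derivative (\<lambda>x. x $ i)) F"
  by (rule bounded_linear_imp_has_derivative[OF bounded_linear_vec_nth])

lemma deriv_coef1: "(t::real) \<noteq> 0 \<Longrightarrow> -(a - d)*(inverse t * (0 - d*h) * inverse t) + (h - 0)/t = (d*(a-d) + t)/t\<^sup>2 * h"
  by (simp add: field_simps power2_eq_square)
lemma deriv_coef2: "(t::real) \<noteq> 0 \<Longrightarrow> -(c*b)*(inverse t*(0 - d*h)*inverse t) + c*k/t = c*d*b/t\<^sup>2*h + c/t*k"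
  by (simp add: field_simps power2_eq_square)

lemma G_deriv:
  assumes t: "1 - d*y$1 \<noteq> 0"
  shows "(G d has_derivative G' d y) (at y within S)"
  unfolding G_def[abs_def]
  apply (rule has_derivative_eq_rhs)
   apply (intro derivative_eq_intros)
                      apply (rule refl t)+
  apply (rule ext)
  unfolding G'_def deriv_coef1[OF t] deriv_coef2[OF t]
  apply (simp add: algebra_simps power2_eq_square)
  done

lemma G'_det:
  assumes "1 - d*y$1 \<noteq> 0"
  shows "det (matrix (G' d y)) = (1-d\<^sup>2)/(1-d*y$1)\<^sup>2 * (sqrt(1-d\<^sup>2)/(1-d*y$1))"
  by (simp add: det_2 matrix_def G'_def axis_def)

lemma vec2_eqI: "(x::real^2)$1 = y$1 \<Longrightarrow> x$2 = y$2 \<Longrightarrow> x = y"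
  by (simp add: vec_eq_iff forall_2)

lemma frac_aux1: "(s::real) \<noteq> 0 \<Longrightarrow> u \<noteq> 0 \<Longrightarrow> (s*a/u)/(s/u) = a"
  by simp
lemma frac_aux2: "(s::real) > 0 \<Longrightarrow> u \<noteq> 0 \<Longrightarrow> sqrt s * (sqrt s * a/u)/(s/u) = a"
  by (simp add: field_simps)
lemma frac_aux3: "(a::real) \<noteq> 0 \<Longrightarrow> b \<noteq> 0 \<Longrightarrow> c \<noteq> 0 \<Longrightarrow> (a*z/(c*b))/(2*a/b) = z/(2*c)"
  by (simp add: field_simps)

lemma frac_aux4: "(t::real) \<noteq> 0 \<Longrightarrow> (x/(2*t))\<^sup>2 + y/t\<^sup>2 = (x\<^sup>2/4 + y)/t\<^sup>2"
  by (simp add: field_simps power2_eq_square)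

lemma GH:
  assumes s: "1 - d\<^sup>2 > 0" and t: "1 + d*Y$1 > 0"
  shows "G d (H d Y) = Y"
proof -
  have e: "1 - d * ((Y$1 + d)/(1 + d*Y$1)) = (1-d\<^sup>2)/(1 + d*Y$1)"
    using t by (simp add: field_simps power2_eq_square)
  have e2: "(Y$1 + d)/(1 + d*Y$1) - d = (1-d\<^sup>2)*Y$1/(1 + d*Y$1)"
    using t by (simp add: field_simps power2_eq_square)
  have c1: "G d (H d Y) $ 1 = ((1-d\<^sup>2)*Y$1/(1 + d*Y$1))/((1-d\<^sup>2)/(1 + d*Y$1))"
    by (simp only: G_nth H_nth e e2)
  have c2: "G d (H d Y) $ 2 = sqrt (1-d\<^sup>2)*(sqrt (1-d\<^sup>2)*Y$2/(1 + d*Y$1))/((1-d\<^sup>2)/(1 + d*Y$1))"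
    by (simp only: G_nth H_nth e e2)
  show ?thesis
    apply (rule vec2_eqI)
     apply (simp only: c1, rule frac_aux1) using s t apply simp_all[2]
    apply (simp only: c2, rule frac_aux2) using s t by simp_all
qed

lemma HG:
  assumes s: "1 - d\<^sup>2 > 0" and t: "1 - d*y$1 > 0"
  shows "H d (G d y) = y"
proof -
  have e: "1 + d * ((y$1 - d)/(1 - d*y$1)) = (1-d\<^sup>2)/(1 - d*y$1)"
    using t by (simp add: field_simps power2_eq_square)
  have e2: "(y$1 - d)/(1 - d*y$1) + d = (1-d\<^sup>2)*y$1/(1 - d*y$1)"
    using t by (simp add: field_simps power2_eq_square)
  have c1: "H d (G d y) $ 1 = ((1-d\<^sup>2)*y$1/(1 - d*y$1))/((1-d\<^sup>2)/(1 - d*y$1))"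
    by (simp only: G_nth H_nth e e2)
  have c2: "H d (G d y) $ 2 = sqrt (1-d\<^sup>2)*(sqrt (1-d\<^sup>2)*y$2/(1 - d*y$1))/((1-d\<^sup>2)/(1 - d*y$1))"
    by (simp only: G_nth H_nth e e2)
  show ?thesis
    apply (rule vec2_eqI)
     apply (simp only: c1, rule frac_aux1) using s t apply simp_all[2]
    apply (simp only: c2, rule frac_aux2) using s t by simp_all
qed

lemma G_norm:
  assumes s: "1 - d\<^sup>2 > 0" and t: "1 - d*y$1 \<noteq> 0"
  shows "1 - (norm (G d y))\<^sup>2 = (1-d\<^sup>2)*(1 - (norm y)\<^sup>2)/(1-d*y$1)\<^sup>2"
proof -
  have "(sqrt (1-d\<^sup>2)*y$2/(1 - d*y$1))\<^sup>2 = (1-d\<^sup>2)*(y$2)\<^sup>2/(1 - d*y$1)\<^sup>2"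
    using s by (simp add: power_divide power_mult_distrib)
  then show ?thesis unfolding norm2_vec2 G_nth using t
    by (simp add: field_simps) (simp add: algebra_simps power2_eq_square)
qed

lemma key_powr_m:
  fixes s t r K m :: real
  assumes s: "s > 0" and t: "t > 0" and r: "r > 0" and K: "K > 0" and m: "m > 0"
  shows "s/t\<^sup>2 * (sqrt s/t) * ((K * s powr (1/m) / (s/t) powr (2/m)) powr (m+2) * (s*r/t\<^sup>2) powr ((4-m)/(2*m)))
     = K powr (m+2) * r powr ((4-m)/(2*m))"
proof -
  have pos1: "s/t\<^sup>2 * (sqrt s/t) > 0" using s t by simp
  have pos2: "K * s powr (1/m) / (s/t) powr (2/m) > 0" using s t K by simp
  have "ln (s/t\<^sup>2 * (sqrt s/t) * ((K * s powr (1/m) / (s/t) powr (2/m)) powr (m+2) * (s*r/t\<^sup>2) powr ((4-m)/(2*m))))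
     = ln (K powr (m+2) * r powr ((4-m)/(2*m)))"
    using s t r K m pos2
    apply (simp add: ln_mult ln_div ln_powr ln_sqrt ln_realpow)
    apply (simp add: field_simps)
    done
  then show ?thesis using pos1 pos2 s t r K
    by (simp add: ln_inj_iff)
qed

lemma key_powr:
  fixes s t r K p :: real
  assumes s: "s > 0" and t: "t > 0" and r: "r > 0" and K: "K > 0" and p: "p > 1"
  shows "\<bar>s/t\<^sup>2 * (sqrt s/t)\<bar> * ((K * s powr (1/(p-1)) / (s/t) powr (2/(p-1))) powr (p+1) * (s*r/t\<^sup>2) powr ((5-p)/(2*(p-1))))
     = K powr (p+1) * r powr ((5-p)/(2*(p-1)))"
proof -
  have pos1: "s/t\<^sup>2 * (sqrt s/t) > 0" using s t by simp
  have e: "p + 1 = (p-1)+2" "5 - p = 4 - (p-1)" by simp_all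
  show ?thesis
    unfolding abs_of_pos[OF pos1] e using key_powr_m[OF s t r K, of "p-1"] p by simp
qed

lemma ellipse_id:
  fixes d y1 y2 :: real
  assumes d: "-1 < d" "d < 1" and t: "1 - d*y1 \<noteq> 0"
  shows "(((y1 - d)/(1 - d*y1) - ell_c d) / ell_a d)\<^sup>2 + (sqrt (1-d\<^sup>2)*y2/(1 - d*y1) / ell_b d)\<^sup>2
     = 1 + (4-d\<^sup>2)*(y1\<^sup>2+y2\<^sup>2 - 1/4)/(1 - d*y1)\<^sup>2"
proof -
  have s: "1 - d\<^sup>2 > 0" using d by (simp add: abs_square_less_1)
  have q: "4 - d\<^sup>2 > 0" using s by linarith
  have q': "4 - d\<^sup>2 \<noteq> 0" "1 - d\<^sup>2 \<noteq> 0" using s q by auto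
  have "(y1 - d)/(1 - d*y1) - ell_c d = (y1 - d)/(1 - d*y1) + (3*d)/(4-d\<^sup>2)"
    by (simp add: ell_c_def)
  also have "\<dots> = ((y1 - d)*(4-d\<^sup>2) + (3*d)*(1 - d*y1))/((1 - d*y1)*(4-d\<^sup>2))"
    by (rule add_frac_eq[OF t q'(1)])
  also have "(y1 - d)*(4-d\<^sup>2) + (3*d)*(1 - d*y1) = (1-d\<^sup>2)*(4*y1 - d)"
    by (simp add: algebra_simps power2_eq_square)
  finally have e0: "(y1 - d)/(1 - d*y1) - ell_c d = (1-d\<^sup>2)*(4*y1 - d)/((1 - d*y1)*(4-d\<^sup>2))" .
  have e1: "((y1 - d)/(1 - d*y1) - ell_c d) / ell_a d = (4*y1 - d)/(2*(1-d*y1))"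
    unfolding e0 ell_a_def by (rule frac_aux3[OF q'(2) q'(1) t])
  have e2: "(sqrt (1-d\<^sup>2)*y2/(1 - d*y1) / ell_b d)\<^sup>2 = (4-d\<^sup>2)*y2\<^sup>2/(1-d*y1)\<^sup>2"
    using s q t by (simp add: ell_b_def power_divide power_mult_distrib real_sqrt_divide)
  have e3: "((4*y1 - d)/(2*(1-d*y1)))\<^sup>2 + (4-d\<^sup>2)*y2\<^sup>2/(1-d*y1)\<^sup>2 
     = ((4*y1 - d)\<^sup>2/4 + (4-d\<^sup>2)*y2\<^sup>2)/(1-d*y1)\<^sup>2"
    by (rule frac_aux4) (use t in simp)
  have e4: "(4*y1 - d)\<^sup>2/4 + (4-d\<^sup>2)*y2\<^sup>2 = (1-d*y1)\<^sup>2 + (4-d\<^sup>2)*(y1\<^sup>2+y2\<^sup>2 - 1/4)"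
    by (simp add: field_simps power2_eq_square)
  show ?thesis unfolding e1 e2 e3 e4 using t
    by (simp add: add_divide_distrib)
qed

lemma G_one_plus:
  assumes t: "1 - d*y$1 \<noteq> 0"
  shows "1 + d * (G d y $ 1) = (1-d\<^sup>2)/(1 - d*y$1)"
  using t by (simp add: field_simps power2_eq_square)

lemma dd_lt:
  assumes "-1 < d" "d < (1::real)" shows "d*d < 1"
proof -
  have "\<bar>d\<bar> < 1" using assms by simp
  then have "\<bar>d\<bar>*\<bar>d\<bar> < 1*1" by (intro mult_strict_mono) auto
  then show ?thesis by (simp add: abs_mult_self)
qed

lemma u_pos:
  fixes d Y1 :: real
  assumes d: "-1 < d" "d < 1" and Y: "\<bar>Y1 - ell_c d\<bar> < ell_a d"
  shows "1 + d*Y1 > 0"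
proof -
  have q1: "2 - d > 0" "2 + d > 0" using d by auto
  have c1: "ell_c d - ell_a d = -(1+2*d)/(2+d)"
  proof -
    have "ell_c d - ell_a d = (-3*d - 2*(1-d\<^sup>2))/(4-d\<^sup>2)"
      by (simp add: ell_c_def ell_a_def diff_divide_distrib)
    also have "\<dots> = (-(1+2*d)*(2-d))/((2+d)*(2-d))"
      by (rule arg_cong2[where f="(/)"]) (simp_all add: algebra_simps power2_eq_square)
    also have "\<dots> = -(1+2*d)/(2+d)" using q1 by simp
    finally show ?thesis .
  qed
  have c2: "ell_c d + ell_a d = (1-2*d)/(2-d)"
  proof -
    have "ell_c d + ell_a d = (-3*d + 2*(1-d\<^sup>2))/(4-d\<^sup>2)"
      by (simp add: ell_c_def ell_a_def add_divide_distrib diff_divide_distrib)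
    also have "\<dots> = ((1-2*d)*(2+d))/((2-d)*(2+d))"
      by (rule arg_cong2[where f="(/)"]) (simp_all add: algebra_simps power2_eq_square)
    also have "\<dots> = (1-2*d)/(2-d)" using q1 by simp
    finally show ?thesis .
  qed
  note ca = c1 c2
  have lo: "Y1 > -(1+2*d)/(2+d)" and hi: "Y1 < (1-2*d)/(2-d)" using Y ca by auto
  show ?thesis
  proof (cases "d \<ge> 0")
    case True
    have "d * Y1 \<ge> d * (-(1+2*d)/(2+d))" using True lo by (intro mult_left_mono) auto
    moreover have "d * (-(1+2*d)/(2+d)) > -1"
    proof -
      have "d*d < 1" using dd_lt[OF d] .
      then have "-(2+d) < d*(-(1+2*d))" by (simp add: algebra_simps)
      then show ?thesis using q1 by (simp add: less_divide_eq)
    qed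
    ultimately show ?thesis by linarith
  next
    case False
    have "d * Y1 \<ge> d * ((1-2*d)/(2-d))" using False hi by (intro mult_left_mono_neg) auto
    moreover have "d * ((1-2*d)/(2-d)) > -1"
    proof -
      have "d*d < 1" using dd_lt[OF d] .
      then have "-(2-d) < d*(1-2*d)" by (simp add: algebra_simps)
      then show ?thesis using q1 by (simp add: less_divide_eq)
    qed
    ultimately show ?thesis by linarith
  qed
qed



lemma cov_real2:
  fixes f :: "real^2 \<Rightarrow> real" and g :: "real^2 \<Rightarrow> real^2"
  assumes S: "S \<in> sets lebesgue"
    and der_g: "\<And>x. x \<in> S \<Longrightarrow> (g has_derivative g' x) (at x within S)"
    and inj: "inj_on g S"
  shows "(\<lambda>x. \<bar>det (matrix (g' x))\<bar> * f(g x)) absolutely_integrable_on S \<and>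
           integral S (\<lambda>x. \<bar>det (matrix (g' x))\<bar> * f (g x)) = b
     \<longleftrightarrow> f absolutely_integrable_on (g ` S) \<and> integral (g ` S) f = b"
proof -
  have "(\<lambda>x. \<bar>det (matrix (g' x))\<bar> *\<^sub>R vec (f(g x)) :: real ^ 1) absolutely_integrable_on S \<and>
           integral S (\<lambda>x. \<bar>det (matrix (g' x))\<bar> *\<^sub>R vec (f(g x))) = (vec b :: real ^ 1)
         \<longleftrightarrow> (\<lambda>x. vec (f x) :: real ^ 1) absolutely_integrable_on (g ` S) \<and>
           integral (g ` S) (\<lambda>x. vec (f x)) = (vec b :: real ^ 1)"
    by (rule has_absolute_integral_change_of_variables[OF S der_g inj])
  thus ?thesis
    by (simp add: absolutely_integrable_on_1_iff integral_on_1_eq)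
qed

lemma ball_t_pos:
  assumes d: "-1 < d" "d < 1" and y: "y \<in> ball (0::real^2) (1/2)"
  shows "1 - d*y$1 > 0"
proof -
  have "\<bar>y$1\<bar> < 1/2" using component_le_norm_cart[of y 1] y by (simp add: dist_norm)
  moreover have "\<bar>d\<bar> < 1" using d by simp
  ultimately have "\<bar>d\<bar> * \<bar>y$1\<bar> < 1 * (1/2)" by (intro mult_strict_mono) auto
  then have "\<bar>d*y$1\<bar> < 1" by (simp add: abs_mult)
  then show ?thesis by simp
qed

theorem lemmaB4:
  fixes p d :: real
  assumes "1 < p" "p < 5" "-1 < d" "d < 1"
  shows "E0 d \<subseteq> ball 0 1 \<and>
    (\<integral>Y\<in>E0 d. kappa p d Y powr (p + 1) * rho p Y \<partial>lborel)
      = kappa0 p powr (p + 1) * (\<integral>y\<in>ball 0 (1/2). rho p y \<partial>lborel)"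
proof -
  note p = assms(1,2) and d = assms(3,4)
  define S where "S = ball (0::real^2) (1/2)"
  have s: "1 - d\<^sup>2 > 0" using d by (simp add: abs_square_less_1)
  have q: "4 - d\<^sup>2 > 0" using s by linarith
  have tpos: "1 - d*y$1 > 0" if "y \<in> S" for y using ball_t_pos[OF d] that by (simp add: S_def)
  have nS: "(norm y)\<^sup>2 < 1/4" if "y \<in> S" for y
  proof -
    have "norm y < 1/2" "0 \<le> norm y" using that by (auto simp: S_def)
    then have "norm y * norm y < 1/2 * (1/2)" by (intro mult_strict_mono) auto
    then show ?thesis by (simp add: power2_eq_square)
  qed
  have Gin: "G d y \<in> E0 d" if "y \<in> S" for y
  proof -
    have t: "1 - d*y$1 \<noteq> 0" using tpos[OF that] by simp
    have "(y$1)\<^sup>2 + (y$2)\<^sup>2 < 1/4" using nS[OF that] by (simp add: norm2_vec2)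
    then have "(4-d\<^sup>2)*((y$1)\<^sup>2+(y$2)\<^sup>2 - 1/4)/(1 - d*y$1)\<^sup>2 < 0"
      using q t by (intro divide_neg_pos mult_pos_neg) auto
    then show ?thesis unfolding E0_def using ellipse_id[OF d t, of "y$2"] by simp
  qed
  have Hin: "Y \<in> G d ` S" if Y: "Y \<in> E0 d" for Y
  proof -
    have a: "ell_a d > 0" using s q by (simp add: ell_a_def)
    have "((Y$1 - ell_c d) / ell_a d)\<^sup>2 < 1"
      using Y zero_le_power2[of "Y$2 / ell_b d"] unfolding E0_def mem_Collect_eq by linarith
    then have "\<bar>(Y$1 - ell_c d) / ell_a d\<bar> < 1" by (simp add: abs_square_less_1)
    then have "\<bar>Y$1 - ell_c d\<bar> < ell_a d" using a by (metis abs_div_pos divide_less_eq_1_pos)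
    then have u: "1 + d*Y$1 > 0" by (rule u_pos[OF d])
    define y where "y = H d Y"
    have GY: "G d y = Y" unfolding y_def by (rule GH[OF s u])
    have ty: "1 - d*y$1 = (1-d\<^sup>2)/(1 + d*Y$1)" unfolding y_def using u
      by (simp add: field_simps power2_eq_square)
    then have t: "1 - d*y$1 \<noteq> 0" "1 - d*y$1 > 0" using s u by auto
    have "((G d y$1 - ell_c d) / ell_a d)\<^sup>2 + (G d y$2 / ell_b d)\<^sup>2 < 1"
      using Y unfolding GY E0_def by simp
    then have "(4-d\<^sup>2)*((y$1)\<^sup>2+(y$2)\<^sup>2 - 1/4)/(1 - d*y$1)\<^sup>2 < 0"
      using ellipse_id[OF d t(1), of "y$2"] by simp
    then have "(4-d\<^sup>2)*((y$1)\<^sup>2+(y$2)\<^sup>2 - 1/4) < 0"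
      using t by (simp add: divide_less_0_iff)
    then have "(norm y)\<^sup>2 < (1/2)\<^sup>2" using q by (simp add: norm2_vec2 mult_less_0_iff power_divide)
    then have "norm y < 1/2" by (rule power_less_imp_less_base) simp
    then have "y \<in> S" by (simp add: S_def)
    then show ?thesis using GY by blast
  qed
  have img: "G d ` S = E0 d" using Gin Hin by blast
  have sub: "E0 d \<subseteq> ball 0 1"
  proof
    fix Y assume "Y \<in> E0 d"
    then obtain y where y: "y \<in> S" "Y = G d y" using img by blast
    have t: "1 - d*y$1 \<noteq> 0" "1 - d*y$1 > 0" using tpos[OF y(1)] by auto
    have "(1-d\<^sup>2)*(1 - (norm y)\<^sup>2)/(1-d*y$1)\<^sup>2 > 0" using s nS[OF y(1)] t by simp
    then have "(norm Y)\<^sup>2 < 1\<^sup>2" using G_norm[OF s t(1)] y(2) by simp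
    then have "norm Y < 1" by (rule power_less_imp_less_base) simp
    then show "Y \<in> ball 0 1" by simp
  qed
  define K where "K = kappa0 p powr (p+1)"
  define F where "F = (\<lambda>Y. kappa p d Y powr (p+1) * rho p Y)"
  have K0: "kappa0 p > 0" using p by (simp add: kappa0_def)
  have pt: "\<bar>det (matrix (G' d y))\<bar> * F (G d y) = K * rho p y" if y: "y \<in> S" for y
  proof -
    have t: "1 - d*y$1 > 0" using tpos[OF y] .
    have t': "1 - d*y$1 \<noteq> 0" using t by simp
    have r: "1 - (norm y)\<^sup>2 > 0" using nS[OF y] by simp
    have k: "kappa p d (G d y) = kappa0 p * (1-d\<^sup>2) powr (1/(p-1)) / ((1-d\<^sup>2)/(1 - d*y$1)) powr (2/(p-1))"
      unfolding kappa_def G_one_plus[OF t'] ..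
    have rr: "rho p (G d y) = ((1-d\<^sup>2)*(1 - (norm y)\<^sup>2)/(1-d*y$1)\<^sup>2) powr ((5-p)/(2*(p-1)))"
      unfolding rho_def G_norm[OF s t'] ..
    show ?thesis unfolding F_def K_def G'_det[OF t'] k rr unfolding rho_def
      by (rule key_powr[OF s t r K0 p(1)])
  qed
  have rho_meas: "rho p \<in> borel_measurable borel" unfolding rho_def by measurable
  have rho_int: "set_integrable lborel S (rho p)"
    unfolding set_integrable_def
  proof (rule integrableI_bounded_set_indicator[where B=1])
    show "S \<in> sets lborel" by (simp add: S_def)
    show "rho p \<in> borel_measurable lborel" using rho_meas by simp
    show "emeasure lborel S < \<infinity>" unfolding S_def by (rule emeasure_lborel_ball_finite)
    show "AE x in lborel. x \<in> S \<longrightarrow> norm (rho p x) \<le> 1"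
    proof (rule AE_I2, rule impI)
      fix x assume x: "x \<in> S"
      have r: "1 - (norm x)\<^sup>2 > 0" "1 - (norm x)\<^sup>2 \<le> 1" using nS[OF x] by auto
      have e: "(5-p)/(2*(p-1)) \<ge> 0" using p by simp
      show "norm (rho p x) \<le> 1" unfolding rho_def using r e
        by (simp add: powr_le1)
    qed
  qed
  have rho_leb: "set_integrable lebesgue S (rho p)"
    using rho_int unfolding set_integrable_def
    by (subst integrable_completion) (auto dest: borel_measurable_integrable)
  have lhs_int: "(\<lambda>x. \<bar>det (matrix (G' d x))\<bar> * F (G d x)) absolutely_integrable_on S"
  proof -
    have "set_integrable lebesgue S (\<lambda>x. K * rho p x)" using rho_leb by simp
    moreover have "set_integrable lebesgue S (\<lambda>x. \<bar>det (matrix (G' d x))\<bar> * F (G d x))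
       = set_integrable lebesgue S (\<lambda>x. K * rho p x)"
      by (rule set_integrable_cong) (auto simp: pt)
    ultimately show ?thesis by simp
  qed
  have lhs_eq: "integral S (\<lambda>x. \<bar>det (matrix (G' d x))\<bar> * F (G d x)) = K * integral S (rho p)"
    by (simp add: pt integral_mult_right cong: integral_cong)
  have cov: "F absolutely_integrable_on (G d ` S) \<and> integral (G d ` S) F = K * integral S (rho p)"
  proof (rule cov_real2[THEN iffD1])
    show "S \<in> sets lebesgue" by (simp add: S_def)
    show "(G d has_derivative G' d x) (at x within S)" if "x \<in> S" for x
      using tpos[OF that] by (intro G_deriv) simp
    show "inj_on (G d) S" by (rule inj_on_inverseI[where g="H d"]) (rule HG[OF s tpos])
  qed (use lhs_int lhs_eq in auto)
  have E0_borel: "E0 d \<in> sets borel"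
  proof -
    have "ell_a d \<noteq> 0" "ell_b d \<noteq> 0" using s q by (auto simp: ell_a_def ell_b_def)
    then have c: "continuous_on UNIV (\<lambda>Y::real^2. ((Y$1 - ell_c d) / ell_a d)\<^sup>2 + (Y$2 / ell_b d)\<^sup>2)"
      by (intro continuous_intros) simp_all
    have "open {Y::real^2. ((Y$1 - ell_c d) / ell_a d)\<^sup>2 + (Y$2 / ell_b d)\<^sup>2 < 1}"
      by (rule open_Collect_less[OF c continuous_on_const])
    then show ?thesis unfolding E0_def by simp
  qed
  have F_meas: "F \<in> borel_measurable borel" unfolding F_def kappa_def rho_def by measurable
  have F_int: "set_integrable lborel (E0 d) F"
  proof -
    have m: "(\<lambda>x. indicator (E0 d) x *\<^sub>R F x) \<in> borel_measurable lborel"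
      using E0_borel F_meas by simp
    show ?thesis using cov unfolding img set_integrable_def
      using integrable_completion[OF m] by simp
  qed
  have "(\<integral>Y\<in>E0 d. F Y \<partial>lborel) = integral (E0 d) F"
    by (rule set_borel_integral_eq_integral(2)[OF F_int])
  also have "\<dots> = K * integral S (rho p)" using cov img by simp
  also have "integral S (rho p) = (\<integral>y\<in>S. rho p y \<partial>lborel)"
    by (rule set_borel_integral_eq_integral(2)[OF rho_int, symmetric])
  finally show ?thesis using sub unfolding F_def K_def S_def by simp
qed

thm_deps lemmaB4

end
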